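(* Let $\vec\sigma$ be a preference profile, $d$ a pseudometric consistent with $\vec\sigma$, $X\in\mathcal A$, and $w_X$ an $X$-truncated weight function for $\vec\sigma$ with $\sum_{Y}w_X^+(Y)d(X,Y)>0$. Suppose $\mathrm{SC}(X,d)\le D\cdot\min_{Z\in\mathcal A}\mathrm{SC}(Z,d)$. Then for every probability distribution $p$ over $\mathcal A$, $$\frac{\mathbb E_{Y\sim p}[\mathrm{SC}(Y,d)]}{\min_{Z\in\mathcal A}\mathrm{SC}(Z,d)}\le D\left(1+\frac{2n\sum_{Y\in\mathcal A}p(Y)\,d(X,Y)}{\sum_{Y\in\mathcal A}w_X^+(Y)\,d(X,Y)}\right).$$
   Context: Setting: $n$ agents $\mathcal N$, $m$ alternatives $\mathcal A$, each agent $i$ with a strict ranking; $X\succ_iY$ means $i$ ranks $X$ above $Y$, and $Y\succeq_iX$ means $Y\succ_iX$ or $Y=X$. A pseudometric $d$ on $\mathcal N\cup\mathcal A$ is consistent with $\vec\sigma$ if $X\succ_iY\Rightarrow d(i,X)\le d(i,Y)$; $\mathrm{SC}(X,d)=\sum_{i}d(i,X)$. An $X$-truncated weight function is $w:\mathcal N\times\mathcal A\to[0,1]$ such that for every agent $i$: $w(i,Y)=0$ whenever $X\succ_iY$, and $\sum_{Y:\,Y\succeq_iX}w(i,Y)=1$. Write $w^+(Y)=\sum_{i\in\mathcal N}w(i,Y)$. *)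

theory Defs
  imports Complex_Main
begin

text \<open>Agents have type 'n, alternatives type 'a; the metric space is 'n + 'a,
 agent i is Inl i, alternative X is Inr X. pref i X Y means X \<succ>_i Y.\<close>

definition strict_ranking :: "'a set \<Rightarrow> ('a \<Rightarrow> 'a \<Rightarrow> bool) \<Rightarrow> bool" where
  "strict_ranking A r \<longleftrightarrow>
     (\<forall>X\<in>A. \<not> r X X) \<and>
     (\<forall>X\<in>A. \<forall>Y\<in>A. \<forall>Z\<in>A. r X Y \<longrightarrow> r Y Z \<longrightarrow> r X Z) \<and>
     (\<forall>X\<in>A. \<forall>Y\<in>A. X \<noteq> Y \<longrightarrow> r X Y \<or> r Y X)"

definition preference_profile ::
  "'n set \<Rightarrow> 'a set \<Rightarrow> ('n \<Rightarrow> 'a \<Rightarrow> 'a \<Rightarrow> bool) \<Rightarrow> bool" where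
  "preference_profile N A pref \<longleftrightarrow> (\<forall>i\<in>N. strict_ranking A (pref i))"

definition pseudometric_on :: "'p set \<Rightarrow> ('p \<Rightarrow> 'p \<Rightarrow> real) \<Rightarrow> bool" where
  "pseudometric_on S d \<longleftrightarrow>
     (\<forall>x\<in>S. d x x = 0) \<and>
     (\<forall>x\<in>S. \<forall>y\<in>S. 0 \<le> d x y \<and> d x y = d y x) \<and>
     (\<forall>x\<in>S. \<forall>y\<in>S. \<forall>z\<in>S. d x z \<le> d x y + d y z)"

definition consistent ::
  "'n set \<Rightarrow> 'a set \<Rightarrow> ('n \<Rightarrow> 'a \<Rightarrow> 'a \<Rightarrow> bool) \<Rightarrow> ('n + 'a \<Rightarrow> 'n + 'a \<Rightarrow> real) \<Rightarrow> bool" where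
  "consistent N A pref d \<longleftrightarrow>
     pseudometric_on (Inl ` N \<union> Inr ` A) d \<and>
     (\<forall>i\<in>N. \<forall>X\<in>A. \<forall>Y\<in>A. pref i X Y \<longrightarrow> d (Inl i) (Inr X) \<le> d (Inl i) (Inr Y))"

definition SC :: "'n set \<Rightarrow> ('n + 'a \<Rightarrow> 'n + 'a \<Rightarrow> real) \<Rightarrow> 'a \<Rightarrow> real" where
  "SC N d X = (\<Sum>i\<in>N. d (Inl i) (Inr X))"

definition truncated_weight ::
  "'n set \<Rightarrow> 'a set \<Rightarrow> ('n \<Rightarrow> 'a \<Rightarrow> 'a \<Rightarrow> bool) \<Rightarrow> 'a \<Rightarrow> ('n \<Rightarrow> 'a \<Rightarrow> real) \<Rightarrow> bool" where
  "truncated_weight N A pref X w \<longleftrightarrow>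
     (\<forall>i\<in>N. \<forall>Y\<in>A. 0 \<le> w i Y \<and> w i Y \<le> 1) \<and>
     (\<forall>i\<in>N. \<forall>Y\<in>A. pref i X Y \<longrightarrow> w i Y = 0) \<and>
     (\<forall>i\<in>N. (\<Sum>Y\<in>{Y\<in>A. pref i Y X \<or> Y = X}. w i Y) = 1)"

definition wplus :: "'n set \<Rightarrow> ('n \<Rightarrow> 'a \<Rightarrow> real) \<Rightarrow> 'a \<Rightarrow> real" where
  "wplus N w Y = (\<Sum>i\<in>N. w i Y)"

definition distribution_on :: "'a set \<Rightarrow> ('a \<Rightarrow> real) \<Rightarrow> bool" where
  "distribution_on A p \<longleftrightarrow> (\<forall>Y\<in>A. 0 \<le> p Y) \<and> (\<Sum>Y\<in>A. p Y) = 1"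

end

theory Submission
  imports Defs
begin

theorem mainTheorem6:
  fixes N :: "'n set" and A :: "'a set"
    and pref :: "'n \<Rightarrow> 'a \<Rightarrow> 'a \<Rightarrow> bool"
    and d :: "'n + 'a \<Rightarrow> 'n + 'a \<Rightarrow> real"
    and X :: 'a and w :: "'n \<Rightarrow> 'a \<Rightarrow> real" and D :: real
    and p :: "'a \<Rightarrow> real"
  assumes "finite N" and "finite A" and "A \<noteq> {}"
    and "preference_profile N A pref"
    and "consistent N A pref d"
    and "X \<in> A"
    and "truncated_weight N A pref X w"
    and "(\<Sum>Y\<in>A. wplus N w Y * d (Inr X) (Inr Y)) > 0"
    and "SC N d X \<le> D * Min (SC N d ` A)"
    and "distribution_on A p"
  shows "(\<Sum>Y\<in>A. p Y * SC N d Y) / Min (SC N d ` A)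
         \<le> D * (1 + 2 * real (card N) * (\<Sum>Y\<in>A. p Y * d (Inr X) (Inr Y))
                    / (\<Sum>Y\<in>A. wplus N w Y * d (Inr X) (Inr Y)))"
proof -
  note fN = assms(1) and fA = assms(2) and XA = assms(6)
  have pm: "pseudometric_on (Inl ` N \<union> Inr ` A) d"
    and cons: "\<And>i Y Z. i\<in>N \<Longrightarrow> Y\<in>A \<Longrightarrow> Z\<in>A \<Longrightarrow> pref i Y Z \<Longrightarrow> d (Inl i) (Inr Y) \<le> d (Inl i) (Inr Z)"
    using assms(5) unfolding consistent_def by auto
  define S where "S = Inl ` N \<union> Inr ` A"
  have inl: "\<And>i. i \<in> N \<Longrightarrow> Inl i \<in> S" and inr: "\<And>Y. Y \<in> A \<Longrightarrow> Inr Y \<in> S"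
    unfolding S_def by auto
  have pm': "(\<forall>x\<in>S. d x x = 0) \<and> (\<forall>x\<in>S. \<forall>y\<in>S. 0 \<le> d x y \<and> d x y = d y x) \<and>
     (\<forall>x\<in>S. \<forall>y\<in>S. \<forall>z\<in>S. d x z \<le> d x y + d y z)"
    using pm unfolding pseudometric_on_def S_def .
  have nn: "\<And>a b. a \<in> S \<Longrightarrow> b \<in> S \<Longrightarrow> 0 \<le> d a b \<and> d a b = d b a"
    using pm' by (elim conjE) (rule bspec, rule bspec)
  have tri: "\<And>a b c. a \<in> S \<Longrightarrow> b \<in> S \<Longrightarrow> c \<in> S \<Longrightarrow> d a c \<le> d a b + d b c"
    using pm' by (elim conjE) (rule bspec, rule bspec, rule bspec)
  have tot: "\<And>i Y Z. i\<in>N \<Longrightarrow> Y\<in>A \<Longrightarrow> Z\<in>A \<Longrightarrow> Y \<noteq> Z \<Longrightarrow> pref i Y Z \<or> pref i Z Y"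
    using assms(4) unfolding preference_profile_def strict_ranking_def by blast
  have w01: "\<And>i Y. i\<in>N \<Longrightarrow> Y\<in>A \<Longrightarrow> 0 \<le> w i Y"
    and w0: "\<And>i Y. i\<in>N \<Longrightarrow> Y\<in>A \<Longrightarrow> pref i X Y \<Longrightarrow> w i Y = 0"
    and w1: "\<And>i. i\<in>N \<Longrightarrow> (\<Sum>Y\<in>{Y\<in>A. pref i Y X \<or> Y = X}. w i Y) = 1"
    using assms(7) unfolding truncated_weight_def by auto
  have wsum: "(\<Sum>Y\<in>A. w i Y) = 1" if i: "i \<in> N" for i
  proof -
    have "(\<Sum>Y\<in>{Y\<in>A. pref i Y X \<or> Y = X}. w i Y) = (\<Sum>Y\<in>A. w i Y)"
      apply (rule sum.mono_neutral_left[OF fA])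
       apply blast
      using tot[OF i _ XA] w0[OF i] by blast
    then show ?thesis using w1[OF i] by simp
  qed
  have key: "w i Y * d (Inr X) (Inr Y) \<le> w i Y * (2 * d (Inl i) (Inr X))"
    if i: "i\<in>N" and Y: "Y\<in>A" for i Y
  proof (cases "pref i X Y")
    case True then show ?thesis using w0[OF i Y] by simp
  next
    case False
    then have "Y = X \<or> pref i Y X" using tot[OF i Y XA] by blast
    then have le: "d (Inl i) (Inr Y) \<le> d (Inl i) (Inr X)" using cons[OF i Y XA] by auto
    have "d (Inr X) (Inr Y) \<le> d (Inr X) (Inl i) + d (Inl i) (Inr Y)"
      by (rule tri) (use inl inr i Y XA in auto)
    moreover have "d (Inr X) (Inl i) = d (Inl i) (Inr X)" using nn[OF inl[OF i] inr[OF XA]] by simp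
    ultimately have "d (Inr X) (Inr Y) \<le> 2 * d (Inl i) (Inr X)" using le by linarith
    then show ?thesis using w01[OF i Y] by (simp add: mult_left_mono)
  qed
  define W where "W = (\<Sum>Y\<in>A. wplus N w Y * d (Inr X) (Inr Y))"
  define E where "E = (\<Sum>Y\<in>A. p Y * d (Inr X) (Inr Y))"
  define M where "M = Min (SC N d ` A)"
  have "W = (\<Sum>i\<in>N. \<Sum>Y\<in>A. w i Y * d (Inr X) (Inr Y))"
    unfolding W_def wplus_def by (simp add: sum_distrib_right sum.swap[of _ A N])
  also have "\<dots> \<le> (\<Sum>i\<in>N. \<Sum>Y\<in>A. w i Y * (2 * d (Inl i) (Inr X)))"
    by (intro sum_mono key)
  also have "\<dots> = (\<Sum>i\<in>N. 2 * d (Inl i) (Inr X))"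
    by (simp add: sum_distrib_right[symmetric] wsum)
  also have "\<dots> = 2 * SC N d X" unfolding SC_def by (simp add: sum_distrib_left)
  finally have W2: "W \<le> 2 * SC N d X" .
  have Wp: "W > 0" using assms(8) W_def by simp
  have SCX: "SC N d X > 0" using W2 Wp by linarith
  have SCnn: "SC N d Y \<ge> 0" if "Y \<in> A" for Y
    unfolding SC_def using nn inl inr that by (intro sum_nonneg) blast
  have "M \<in> SC N d ` A" unfolding M_def using fA assms(3) by simp
  then have Mnn: "M \<ge> 0" using SCnn by auto
  have DM: "SC N d X \<le> D * M" using assms(9) M_def by simp
  have Mp: "M > 0" using Mnn DM SCX by (cases "M = 0") auto
  have Dp: "D > 0" proof (rule ccontr)
    assume "\<not> D > 0" then have "D * M \<le> 0" using Mp by (simp add: mult_nonpos_nonneg)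
    then show False using DM SCX by linarith
  qed
  have SCY: "SC N d Y \<le> SC N d X + real (card N) * d (Inr X) (Inr Y)" if Y: "Y\<in>A" for Y
  proof -
    have "SC N d Y \<le> (\<Sum>i\<in>N. d (Inl i) (Inr X) + d (Inr X) (Inr Y))"
      unfolding SC_def by (intro sum_mono tri) (use Y XA inl inr in auto)
    then show ?thesis unfolding SC_def by (simp add: sum.distrib)
  qed
  have pnn: "\<And>Y. Y\<in>A \<Longrightarrow> 0 \<le> p Y" and p1: "(\<Sum>Y\<in>A. p Y) = 1"
    using assms(10) unfolding distribution_on_def by auto
  have "(\<Sum>Y\<in>A. p Y * SC N d Y) \<le> (\<Sum>Y\<in>A. p Y * (SC N d X + real (card N) * d (Inr X) (Inr Y)))"
    by (intro sum_mono mult_left_mono SCY pnn)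
  also have "\<dots> = SC N d X + real (card N) * E"
    unfolding E_def by (simp add: distrib_left sum.distrib sum_distrib_right[symmetric] p1 sum_distrib_left algebra_simps)
  finally have S: "(\<Sum>Y\<in>A. p Y * SC N d Y) \<le> SC N d X + real (card N) * E" .
  have Enn: "E \<ge> 0" unfolding E_def using pnn nn inr XA by (intro sum_nonneg mult_nonneg_nonneg) auto
  have "real (card N) * E * W \<le> real (card N) * E * (2 * SC N d X)"
    using W2 Enn by (intro mult_left_mono) auto
  then have "real (card N) * E \<le> SC N d X * (2 * real (card N) * E / W)"
    using Wp by (simp add: field_simps)
  then have S2: "(\<Sum>Y\<in>A. p Y * SC N d Y) \<le> SC N d X * (1 + 2 * real (card N) * E / W)"
    using S by (simp add: algebra_simps)
  have F: "1 + 2 * real (card N) * E / W \<ge> 0" using Enn Wp by simp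
  have "(\<Sum>Y\<in>A. p Y * SC N d Y) \<le> D * M * (1 + 2 * real (card N) * E / W)"
    using S2 mult_right_mono[OF DM F] by linarith
  then have "(\<Sum>Y\<in>A. p Y * SC N d Y) / M \<le> D * (1 + 2 * real (card N) * E / W)"
    using Mp by (simp add: divide_le_eq algebra_simps)
  then show ?thesis unfolding M_def E_def W_def .
qed

end
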